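(* Let $H$ be a subgroup of finite index in a group $G$. A subset $A\subset H$ is small in $H$ if and only if $A$ is small in $G$.
   Context: A subset $L$ of a group $\Gamma$ is large in $\Gamma$ if there is a finite $F\subset\Gamma$ with $\Gamma=FL$. A subset $A\subset\Gamma$ is small in $\Gamma$ if for every large set $L\subset\Gamma$ the set $L\setminus A$ is large in $\Gamma$. *)

theory Defs
  imports "HOL-Algebra.Coset"
begin

definition large_in :: "('a, 'b) monoid_scheme \<Rightarrow> 'a set \<Rightarrow> bool" where
  "large_in G L \<longleftrightarrow> L \<subseteq> carrier G \<and>
     (\<exists>F. finite F \<and> F \<subseteq> carrier G \<and> carrier G = F <#>\<^bsub>G\<^esub> L)"

definition small_in :: "('a, 'b) monoid_scheme \<Rightarrow> 'a set \<Rightarrow> bool" where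
  "small_in G A \<longleftrightarrow> A \<subseteq> carrier G \<and>
     (\<forall>L. large_in G L \<longrightarrow> large_in G (L - A))"

end

theory Submission
  imports Defs
begin

lemma (in group) reps_exist:
  assumes sg: "subgroup H G" and fin: "finite (rcosets H)"
  shows "\<exists>T. finite T \<and> T \<subseteq> carrier G \<and> T \<inter> H \<subseteq> {\<one>} \<and>
          (\<forall>g\<in>carrier G. \<exists>s\<in>T. s \<otimes> g \<in> H)"
proof -
  define rep where "rep C = (if C = H then \<one> else (SOME x. x \<in> C))" for C
  have Hc: "H \<subseteq> carrier G" using sg subgroup.subset by blast
  have repin: "rep C \<in> C" if CR: "C \<in> rcosets H" for C
  proof -
    obtain a where a: "a \<in> carrier G" "C = H #> a" using CR unfolding RCOSETS_def by blast
    show ?thesis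
    proof (cases "C = H")
      case True then show ?thesis using sg subgroup.one_closed rep_def by auto
    next
      case False
      have "a \<in> C" using a rcos_self[OF a(1) sg] by simp
      then have "(SOME x. x \<in> C) \<in> C" by (rule someI)
      then show ?thesis using False unfolding rep_def by simp
    qed
  qed
  have repc: "rep C \<in> carrier G" if CR: "C \<in> rcosets H" for C
  proof -
    obtain a where a: "a \<in> carrier G" "C = H #> a" using CR unfolding RCOSETS_def by blast
    then show ?thesis using repin[OF CR] r_coset_subset_G[OF Hc a(1)] by blast
  qed
  have repH: "rep C = \<one>" if CR: "C \<in> rcosets H" "rep C \<in> H" for C
  proof (rule ccontr)
    assume ne: "rep C \<noteq> \<one>"
    then have CH: "C \<noteq> H" unfolding rep_def by auto
    obtain a where a: "a \<in> carrier G" "C = H #> a" using CR unfolding RCOSETS_def by blast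
    have "H #> a = H #> rep C" using repin[OF CR(1)] a by (intro repr_independence sg) auto
    also have "\<dots> = H" by (rule coset_join2[OF repc[OF CR(1)] sg CR(2)])
    finally show False using CH a by simp
  qed
  define T where "T = rep ` (rcosets H)"
  show ?thesis
  proof (intro exI[of _ T] conjI ballI)
    show "finite T" using fin unfolding T_def by simp
    show "T \<subseteq> carrier G" using repc unfolding T_def by blast
    show "T \<inter> H \<subseteq> {\<one>}" using repH unfolding T_def by blast
  next
    fix g assume g: "g \<in> carrier G"
    have C: "H #> inv g \<in> rcosets H" using rcosetsI Hc g by simp
    then have "rep (H #> inv g) \<in> H #> inv g" by (rule repin)
    then obtain h where h: "h \<in> H" "rep (H #> inv g) = h \<otimes> inv g"
      unfolding r_coset_def by blast
    have hc: "h \<in> carrier G" using h(1) Hc by blast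
    have "rep (H #> inv g) \<otimes> g = h" using h(2) g hc by (simp add: m_assoc)
    then show "\<exists>s\<in>T. s \<otimes> g \<in> H" using C h(1) unfolding T_def by blast
  qed
qed

lemma large_inI:
  assumes "monoid G" "L \<subseteq> carrier G" "finite F" "F \<subseteq> carrier G"
    "\<And>g. g \<in> carrier G \<Longrightarrow> \<exists>f\<in>F. \<exists>l\<in>L. g = f \<otimes>\<^bsub>G\<^esub> l"
  shows "large_in G L"
  unfolding large_in_def
proof (intro conjI exI[of _ F])
  show "carrier G = F <#>\<^bsub>G\<^esub> L"
  proof
    show "carrier G \<subseteq> F <#>\<^bsub>G\<^esub> L" using assms(5) unfolding set_mult_def by blast
    show "F <#>\<^bsub>G\<^esub> L \<subseteq> carrier G" using assms(1,2,4) unfolding set_mult_def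
      by (auto intro: monoid.m_closed)
  qed
qed (use assms in auto)

lemma large_inE:
  assumes "large_in G L"
  obtains F where "finite F" "F \<subseteq> carrier G" "L \<subseteq> carrier G"
    "\<And>g. g \<in> carrier G \<Longrightarrow> \<exists>f\<in>F. \<exists>l\<in>L. g = f \<otimes>\<^bsub>G\<^esub> l"
proof -
  obtain F where F: "finite F" "F \<subseteq> carrier G" "carrier G = F <#>\<^bsub>G\<^esub> L" "L \<subseteq> carrier G"
    using assms unfolding large_in_def by blast
  show ?thesis
  proof (rule that[OF F(1,2,4)])
    fix g assume "g \<in> carrier G"
    then have "g \<in> F <#>\<^bsub>G\<^esub> L" using F(3) by simp
    then show "\<exists>f\<in>F. \<exists>l\<in>L. g = f \<otimes>\<^bsub>G\<^esub> l" unfolding set_mult_def by blast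
  qed
qed

lemma (in group) main5p7:
  assumes "subgroup H G" and "finite (rcosets H)" and "A \<subseteq> H"
  shows "small_in (G\<lparr>carrier := H\<rparr>) A \<longleftrightarrow> small_in G A"
proof -
  let ?K = "G\<lparr>carrier := H\<rparr>"
  have sg: "subgroup H G" by (rule assms(1))
  have Hc: "H \<subseteq> carrier G" using sg subgroup.subset by blast
  have gK: "group ?K" using sg subgroup.subgroup_is_group is_group by blast
  then have mK: "monoid ?K" by (rule group.is_monoid)
  obtain T where T: "finite T" "T \<subseteq> carrier G" "T \<inter> H \<subseteq> {\<one>}"
    "\<And>g. g \<in> carrier G \<Longrightarrow> \<exists>s\<in>T. s \<otimes> g \<in> H"
    using reps_exist[OF sg assms(2)] by blast
  have up: "large_in G S" if S: "S \<subseteq> H" "large_in ?K S" for S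
  proof -
    obtain F where F0: "finite F" "F \<subseteq> carrier ?K"
      "\<And>k. k \<in> carrier ?K \<Longrightarrow> \<exists>f\<in>F. \<exists>l\<in>S. k = f \<otimes>\<^bsub>?K\<^esub> l"
      by (rule large_inE[OF S(2)]) blast
    have F: "finite F" "F \<subseteq> H" "\<And>k. k \<in> H \<Longrightarrow> \<exists>f\<in>F. \<exists>l\<in>S. k = f \<otimes> l"
      using F0 by auto
    show ?thesis
    proof (rule large_inI[where F="(\<lambda>(s,f). inv s \<otimes> f) ` (T \<times> F)"])
      show "monoid G" by (rule is_monoid)
      show "S \<subseteq> carrier G" using S Hc by blast
      show "finite ((\<lambda>(s,f). inv s \<otimes> f) ` (T \<times> F))" using T(1) F(1) by simp
      show "(\<lambda>(s,f). inv s \<otimes> f) ` (T \<times> F) \<subseteq> carrier G" using T(2) F(2) Hc by (auto intro!: m_closed inv_closed)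
    next
      fix g assume g: "g \<in> carrier G"
      obtain s where s: "s \<in> T" "s \<otimes> g \<in> H" using T(4) g by blast
      obtain f l where fl: "f \<in> F" "l \<in> S" "s \<otimes> g = f \<otimes> l" using F(3) s(2) by blast
      have sc: "s \<in> carrier G" using s T(2) by blast
      have fc: "f \<in> carrier G" "l \<in> carrier G" using fl F(2) S(1) Hc by auto
      have "g = inv s \<otimes> (s \<otimes> g)" using sc g by (simp add: m_assoc[symmetric])
      also have "\<dots> = (inv s \<otimes> f) \<otimes> l" using fl sc fc by (simp add: m_assoc)
      finally have gq: "g = inv s \<otimes> f \<otimes> l" .
      show "\<exists>f\<in>(\<lambda>(s,f). inv s \<otimes> f) ` (T \<times> F). \<exists>l\<in>S. g = f \<otimes> l"
      proof (rule bexI[of _ "inv s \<otimes> f"])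
        show "inv s \<otimes> f \<in> (\<lambda>(s,f). inv s \<otimes> f) ` (T \<times> F)"
          using s(1) fl(1) by (intro image_eqI[where x="(s,f)"]) auto
      qed (use gq fl(2) in blast)
    qed
  qed
  have down: "large_in ?K S" if S: "S \<subseteq> H" "large_in G S" for S
  proof -
    obtain F where F: "finite F" "F \<subseteq> carrier G"
      "\<And>k. k \<in> carrier G \<Longrightarrow> \<exists>f\<in>F. \<exists>l\<in>S. k = f \<otimes> l"
      by (rule large_inE[OF S(2)]) blast
    show ?thesis
    proof (rule large_inI[where F="F \<inter> H"])
      show "monoid ?K" by (rule mK)
    next
      fix h assume h: "h \<in> carrier ?K"
      then have hH: "h \<in> H" by simp
      obtain f l where fl: "f \<in> F" "l \<in> S" "h = f \<otimes> l" using F(3) hH Hc by blast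
      have fc: "f \<in> carrier G" "l \<in> carrier G" using fl F(2) S(1) Hc by auto
      have "f = h \<otimes> inv l" using fl fc by (simp add: m_assoc)
      then have "f \<in> H" using hH fl(2) S(1) sg by (simp add: subgroup.m_closed subgroup.m_inv_closed subsetD)
      then show "\<exists>f\<in>F \<inter> H. \<exists>l\<in>S. h = f \<otimes>\<^bsub>?K\<^esub> l" using fl by auto
    qed (use S F in auto)
  qed
  show ?thesis
  proof
    assume sm: "small_in ?K A"
    show "small_in G A" unfolding small_in_def
    proof (intro conjI allI impI)
      show "A \<subseteq> carrier G" using assms(3) Hc by blast
    next
      fix L assume LL: "large_in G L"
      obtain F where F: "finite F" "F \<subseteq> carrier G" "L \<subseteq> carrier G"
        "\<And>k. k \<in> carrier G \<Longrightarrow> \<exists>f\<in>F. \<exists>l\<in>L. k = f \<otimes> l"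
        by (rule large_inE[OF LL]) blast
      define L' where "L' = H \<inter> {t \<otimes> l | t l. t \<in> T \<and> l \<in> L}"
      have L'K: "large_in ?K L'"
      proof (rule large_inI[where F="H \<inter> ((\<lambda>(f,t). f \<otimes> inv t) ` (F \<times> T))"])
        show "monoid ?K" by (rule mK)
        show "L' \<subseteq> carrier ?K" unfolding L'_def by auto
        show "finite (H \<inter> ((\<lambda>(f,t). f \<otimes> inv t) ` (F \<times> T)))" using F(1) T(1) by simp
        show "H \<inter> ((\<lambda>(f,t). f \<otimes> inv t) ` (F \<times> T)) \<subseteq> carrier ?K" by auto
      next
        fix h assume "h \<in> carrier ?K"
        then have hH: "h \<in> H" by simp
        then have hc: "h \<in> carrier G" using Hc by blast
        obtain f l where fl: "f \<in> F" "l \<in> L" "h = f \<otimes> l" using F(4) hc by blast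
        have fc: "f \<in> carrier G" "l \<in> carrier G" using fl F(2,3) by auto
        obtain t where t: "t \<in> T" "t \<otimes> l \<in> H" using T(4) fc(2) by blast
        have tc: "t \<in> carrier G" using t T(2) by blast
        have eq: "h = (f \<otimes> inv t) \<otimes> (t \<otimes> l)" using fl fc tc
          by (simp add: m_assoc[symmetric]) (simp add: m_assoc)
        have tlc: "t \<otimes> l \<in> carrier G" using tc fc by simp
        have "h \<otimes> inv (t \<otimes> l) = (f \<otimes> inv t) \<otimes> ((t \<otimes> l) \<otimes> inv (t \<otimes> l))"
          using eq fc tc tlc by (simp only: m_assoc inv_closed m_closed)
        also have "\<dots> = f \<otimes> inv t" using fc tc tlc by simp
        finally have "f \<otimes> inv t = h \<otimes> inv (t \<otimes> l)" by simp
        then have "f \<otimes> inv t \<in> H" using hH t(2) sg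
          by (simp add: subgroup.m_closed subgroup.m_inv_closed)
        moreover have "t \<otimes> l \<in> L'" unfolding L'_def using t fl by blast
        ultimately show "\<exists>f\<in>H \<inter> ((\<lambda>(f,t). f \<otimes> inv t) ` (F \<times> T)). \<exists>l\<in>L'. h = f \<otimes>\<^bsub>?K\<^esub> l"
          using eq fl(1) t(1) by force
      qed
      then have "large_in ?K (L' - A)" using sm unfolding small_in_def by blast
      then obtain E where E0: "finite E" "E \<subseteq> carrier ?K"
        "\<And>k. k \<in> carrier ?K \<Longrightarrow> \<exists>e\<in>E. \<exists>y\<in>L' - A. k = e \<otimes>\<^bsub>?K\<^esub> y"
        by (rule large_inE) blast
      have E: "finite E" "E \<subseteq> H" "\<And>k. k \<in> H \<Longrightarrow> \<exists>e\<in>E. \<exists>y\<in>L' - A. k = e \<otimes> y"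
        using E0 by auto
      show "large_in G (L - A)"
      proof (rule large_inI[where F="(\<lambda>(s,e,t). inv s \<otimes> e \<otimes> t) ` (T \<times> E \<times> T)"])
        show "monoid G" by (rule is_monoid)
        show "L - A \<subseteq> carrier G" using F(3) by blast
        show "finite ((\<lambda>(s,e,t). inv s \<otimes> e \<otimes> t) ` (T \<times> E \<times> T))" using T(1) E(1) by simp
        show "(\<lambda>(s,e,t). inv s \<otimes> e \<otimes> t) ` (T \<times> E \<times> T) \<subseteq> carrier G" using T(2) E(2) Hc by (auto intro!: m_closed inv_closed)
      next
        fix g assume g: "g \<in> carrier G"
        obtain s where s: "s \<in> T" "s \<otimes> g \<in> H" using T(4) g by blast
        obtain e y where ey: "e \<in> E" "y \<in> L' - A" "s \<otimes> g = e \<otimes> y" using E(3) s(2) by blast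
        obtain t l where tl: "t \<in> T" "l \<in> L" "y = t \<otimes> l" "y \<in> H" using ey(2) unfolding L'_def by blast
        have sc: "s \<in> carrier G" "t \<in> carrier G" "l \<in> carrier G" "e \<in> carrier G"
          using s tl T(2) F(3) ey E(2) Hc by auto
        have lA: "l \<notin> A"
        proof
          assume "l \<in> A"
          then have lH: "l \<in> H" using assms(3) by blast
          have "t = y \<otimes> inv l" using tl sc by (simp add: m_assoc)
          then have "t \<in> H" using lH tl(4) sg by (simp add: subgroup.m_closed subgroup.m_inv_closed)
          then have "t = \<one>" using T(3) tl(1) by blast
          then have "y = l" using tl sc by simp
          then show False using ey(2) \<open>l \<in> A\<close> by blast
        qed
        have "g = inv s \<otimes> (s \<otimes> g)" using sc g by (simp add: m_assoc[symmetric])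
        also have "\<dots> = (inv s \<otimes> e \<otimes> t) \<otimes> l" using ey tl sc by (simp add: m_assoc)
        finally have gq: "g = inv s \<otimes> e \<otimes> t \<otimes> l" .
        show "\<exists>f\<in>(\<lambda>(s,e,t). inv s \<otimes> e \<otimes> t) ` (T \<times> E \<times> T). \<exists>l\<in>L - A. g = f \<otimes> l"
        proof (rule bexI[of _ "inv s \<otimes> e \<otimes> t"])
          show "inv s \<otimes> e \<otimes> t \<in> (\<lambda>(s,e,t). inv s \<otimes> e \<otimes> t) ` (T \<times> E \<times> T)"
            using s(1) ey(1) tl(1) by (intro image_eqI[where x="(s,e,t)"]) auto
        qed (use gq tl(2) lA in blast)
      qed
    qed
  next
    assume sm: "small_in G A"
    show "small_in ?K A" unfolding small_in_def
    proof (intro conjI allI impI)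
      show "A \<subseteq> carrier ?K" using assms(3) by simp
    next
      fix L assume LK: "large_in ?K L"
      then have LH: "L \<subseteq> H" unfolding large_in_def by simp
      then have "large_in G L" using up LK by blast
      then have "large_in G (L - A)" using sm unfolding small_in_def by blast
      then show "large_in ?K (L - A)" using down LH by blast
    qed
  qed
qed

theorem lemma5p7:
  fixes G :: "('a, 'b) monoid_scheme" and H A :: "'a set"
  assumes "group G" and "subgroup H G" and "finite (rcosets\<^bsub>G\<^esub> H)"
    and "A \<subseteq> H"
  shows "small_in (G\<lparr>carrier := H\<rparr>) A \<longleftrightarrow> small_in G A"
  using group.main5p7[OF assms] .

end
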